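(* If $n > k \geq s \geq 0$ are integers, then there exists no $(n,k,s,s)$-oriented graph.
   Context: An oriented graph is a digraph with no loops and no pair of symmetric arcs. For vertices $u,v$ write $u(1\text{-}0)v$ if there is an arc from $u$ to $v$, and $u(0\text{-}0)v$ if there is no arc between $u$ and $v$. A vertex $v$ is weakly reachable within two steps from $u$ if $u(1\text{-}0)v$, or $u(0\text{-}0)v$, or for some vertex $w$ one has $u(1\text{-}0)w(1\text{-}0)v$, or $u(1\text{-}0)w(0\text{-}0)v$, or $u(0\text{-}0)w(1\text{-}0)v$. A vertex $u$ is a weak king if every other vertex is weakly reachable within two steps from $u$, and a weak serf if $u$ is weakly reachable within two steps from every other vertex. An $(n,k,s,b)$-oriented graph is an oriented graph on $n$ vertices with exactly $k$ weak kings and exactly $s$ weak serfs, such that exactly $b$ of the weak kings are also weak serfs. *)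

theory Defs
  imports Main
begin

definition oriented_graph :: "'a set \<Rightarrow> ('a \<Rightarrow> 'a \<Rightarrow> bool) \<Rightarrow> bool" where
  "oriented_graph V A \<longleftrightarrow> finite V \<and>
     (\<forall>u v. A u v \<longrightarrow> u \<in> V \<and> v \<in> V) \<and>
     (\<forall>v. \<not> A v v) \<and>
     (\<forall>u v. A u v \<longrightarrow> \<not> A v u)"

definition no_arc :: "('a \<Rightarrow> 'a \<Rightarrow> bool) \<Rightarrow> 'a \<Rightarrow> 'a \<Rightarrow> bool" where
  "no_arc A u v \<longleftrightarrow> \<not> A u v \<and> \<not> A v u"

definition weakly_reach2 :: "'a set \<Rightarrow> ('a \<Rightarrow> 'a \<Rightarrow> bool) \<Rightarrow> 'a \<Rightarrow> 'a \<Rightarrow> bool" where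
  "weakly_reach2 V A u v \<longleftrightarrow>
     A u v \<or> no_arc A u v \<or>
     (\<exists>w\<in>V. (A u w \<and> A w v) \<or> (A u w \<and> no_arc A w v) \<or> (no_arc A u w \<and> A w v))"

definition weak_king :: "'a set \<Rightarrow> ('a \<Rightarrow> 'a \<Rightarrow> bool) \<Rightarrow> 'a \<Rightarrow> bool" where
  "weak_king V A u \<longleftrightarrow> u \<in> V \<and> (\<forall>v\<in>V. v \<noteq> u \<longrightarrow> weakly_reach2 V A u v)"

definition weak_serf :: "'a set \<Rightarrow> ('a \<Rightarrow> 'a \<Rightarrow> bool) \<Rightarrow> 'a \<Rightarrow> bool" where
  "weak_serf V A u \<longleftrightarrow> u \<in> V \<and> (\<forall>v\<in>V. v \<noteq> u \<longrightarrow> weakly_reach2 V A v u)"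

definition nksb_oriented_graph ::
  "'a set \<Rightarrow> ('a \<Rightarrow> 'a \<Rightarrow> bool) \<Rightarrow> nat \<Rightarrow> nat \<Rightarrow> nat \<Rightarrow> nat \<Rightarrow> bool" where
  "nksb_oriented_graph V A n k s b \<longleftrightarrow>
     oriented_graph V A \<and> card V = n \<and>
     card {u\<in>V. weak_king V A u} = k \<and>
     card {u\<in>V. weak_serf V A u} = s \<and>
     card {u\<in>V. weak_king V A u \<and> weak_serf V A u} = b"

end

theory Submission
  imports Defs
begin

definition FF :: "('a \<Rightarrow> 'a \<Rightarrow> bool) \<Rightarrow> 'a \<Rightarrow> 'a \<Rightarrow> bool" where
  "FF A x y \<longleftrightarrow> A y x \<and> (\<forall>w. A x w \<longrightarrow> A y w) \<and> (\<forall>w. A w y \<longrightarrow> A w x)"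

lemma not_reach_iff:
  assumes "oriented_graph V A" "x \<in> V" "y \<in> V" "x \<noteq> y"
  shows "\<not> weakly_reach2 V A x y \<longleftrightarrow> FF A x y"
proof
  assume h: "\<not> weakly_reach2 V A x y"
  have yx: "A y x" using h unfolding weakly_reach2_def no_arc_def by auto
  have "\<forall>w. A x w \<longrightarrow> A y w"
  proof (intro allI impI)
    fix w assume "A x w"
    then have "w \<in> V" using assms(1) unfolding oriented_graph_def by auto
    then show "A y w" using h \<open>A x w\<close> unfolding weakly_reach2_def no_arc_def by auto
  qed
  moreover have "\<forall>w. A w y \<longrightarrow> A w x"
  proof (intro allI impI)
    fix w assume "A w y"
    then have "w \<in> V" using assms(1) unfolding oriented_graph_def by auto
    then show "A w x" using h \<open>A w y\<close> \<open>\<forall>w. A x w \<longrightarrow> A y w\<close> assms(1)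
      unfolding weakly_reach2_def no_arc_def oriented_graph_def by metis
  qed
  ultimately show "FF A x y" using yx unfolding FF_def by auto
next
  assume "FF A x y"
  then show "\<not> weakly_reach2 V A x y" using assms(1)
    unfolding FF_def weakly_reach2_def no_arc_def oriented_graph_def by metis
qed

lemma king_iff:
  assumes "oriented_graph V A" "u \<in> V"
  shows "weak_king V A u \<longleftrightarrow> \<not> (\<exists>v\<in>V. FF A u v)"
proof -
  have "FF A u u \<Longrightarrow> False" using assms(1) unfolding FF_def oriented_graph_def by auto
  then show ?thesis using not_reach_iff[OF assms(1) assms(2)] assms(2)
    unfolding weak_king_def by metis
qed

lemma serf_iff:
  assumes "oriented_graph V A" "u \<in> V"
  shows "weak_serf V A u \<longleftrightarrow> \<not> (\<exists>v\<in>V. FF A v u)"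
proof -
  have "FF A u u \<Longrightarrow> False" using assms(1) unfolding FF_def oriented_graph_def by auto
  then show ?thesis using not_reach_iff[OF assms(1) _ assms(2)] assms(2)
    unfolding weak_serf_def by metis
qed

lemma FF_trans: "FF A x y \<Longrightarrow> FF A y z \<Longrightarrow> FF A x z"
  unfolding FF_def by blast

lemma key:
  assumes og: "oriented_graph V A"
  shows "x \<in> V \<Longrightarrow> \<not> weak_king V A x \<Longrightarrow> \<exists>m\<in>V. weak_serf V A m \<and> \<not> weak_king V A m"
proof (induction "card V - card {w\<in>V. A w x}" arbitrary: x rule: less_induct)
  case less
  show ?case
  proof (cases "weak_serf V A x")
    case True then show ?thesis using less by auto
  next
    case False
    then obtain m where m: "m \<in> V" "FF A m x" using serf_iff[OF og less(2)] by auto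
    obtain y where y: "y \<in> V" "FF A x y" using king_iff[OF og less(2)] less(3) by auto
    have nk: "\<not> weak_king V A m" using king_iff[OF og m(1)] FF_trans[OF m(2) y(2)] y(1) by auto
    have fin: "finite V" using og unfolding oriented_graph_def by auto
    have sub: "{w\<in>V. A w x} \<subset> {w\<in>V. A w m}"
    proof
      show "{w\<in>V. A w x} \<subseteq> {w\<in>V. A w m}" using m(2) unfolding FF_def by auto
      have "x \<in> {w\<in>V. A w m}" using m less(2) unfolding FF_def by auto
      moreover have "x \<notin> {w\<in>V. A w x}" using og unfolding oriented_graph_def by auto
      ultimately show "{w\<in>V. A w x} \<noteq> {w\<in>V. A w m}" by blast
    qed
    have "card {w\<in>V. A w x} < card {w\<in>V. A w m}"
      by (rule psubset_card_mono[OF _ sub]) (use fin in auto)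
    moreover have "card {w\<in>V. A w m} \<le> card V" by (rule card_mono[OF fin]) auto
    ultimately show ?thesis using less(1)[OF _ m(1) nk] by linarith
  qed
qed

theorem theorem8:
  fixes n k s :: nat and V :: "'a set" and A :: "'a \<Rightarrow> 'a \<Rightarrow> bool"
  assumes "n > k" and "k \<ge> s"
  shows "\<not> nksb_oriented_graph V A n k s s"
proof
  assume h: "nksb_oriented_graph V A n k s s"
  have og: "oriented_graph V A" using h unfolding nksb_oriented_graph_def by auto
  have fin: "finite V" using og unfolding oriented_graph_def by auto
  have "card {u\<in>V. weak_king V A u} < card V" using h assms(1) unfolding nksb_oriented_graph_def by auto
  then obtain x where x: "x \<in> V" "\<not> weak_king V A x" by (metis (mono_tags, lifting) mem_Collect_eq nat_less_le subsetI card_mono[OF fin] subset_antisym)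
  obtain m where m: "m \<in> V" "weak_serf V A m" "\<not> weak_king V A m" using key[OF og x] by auto
  have eq: "card {u\<in>V. weak_king V A u \<and> weak_serf V A u} = card {u\<in>V. weak_serf V A u}"
    using h unfolding nksb_oriented_graph_def by auto
  have "{u\<in>V. weak_king V A u \<and> weak_serf V A u} \<subset> {u\<in>V. weak_serf V A u}" using m by auto
  then have "card {u\<in>V. weak_king V A u \<and> weak_serf V A u} < card {u\<in>V. weak_serf V A u}"
    by (rule psubset_card_mono[rotated]) (use fin in auto)
  with eq show False by simp
qed

end
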